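(* Let $(e_i)_{i\in\omega}$ be a sequence of events with $<_0$, $\mathrm{Add},\mathrm{Rem},\mathrm{Cnt}$, $\mathrm{val}$, $\chi$ as in the context. Then: (1) If there is a sequence of finite sets $(D_i)_{i\in\omega}$, $D_i\subseteq\mathbb N$, witnessing the state-based specification, then there is a function $\gamma$ on the $\mathrm{Op}^1$ events of the sequence satisfying FS0, FS1 and FS2. (2) If there is a function $\gamma$ on the $\mathrm{Op}^1$ events of the sequence satisfying FS0, FS1 and FS2, then there is a sequence of finite sets $(D_i)_{i\in\omega}$, $D_i\subseteq\mathbb N$, with $D_0=\emptyset$ such that every triple $(D_i,e_i,D_{i+1})$ is correct in the sense of the table in the context.
   Context: Setting: an infinite sequence of events $(e_i)_{i\in\omega}$, linearly ordered by $<_0$ where $e_i<_0e_j$ iff $i<j$. Three unary predicates $\mathrm{Add},\mathrm{Rem},\mathrm{Cnt}$ partition the events. Each event $a$ has a key $\mathrm{val}(a)\in\mathbb N$ and a status $\chi(a)\in\{0,1,f\}$, with $\chi(a)\in\{0,1\}$ whenever $\mathrm{Cnt}(a)$. Notation: for $p\in\{0,1,f\}$, $\mathrm{Add}^p(a)$ abbreviates $\mathrm{Add}(a)\wedge\chi(a)=p$, and $\mathrm{Rem}^p(a)$ similarly; $\mathrm{Cnt}^p$ similarly for $p\in\{0,1\}$; for $p\in\{0,1\}$, $\mathrm{Op}^p(a)$ abbreviates $(\mathrm{Add}(a)\vee\mathrm{Rem}(a)\vee\mathrm{Cnt}(a))\wedge\chi(a)=p$. State-based specification: a sequence $(D_i)_{i\in\omega}$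 of finite subsets of $\mathbb N$ witnesses it if $D_0=\emptyset$ and for every $i$ the triple $(D,a,D')=(D_i,e_i,D_{i+1})$, with $x=\mathrm{val}(a)$, is correct, meaning: if $\chi(a)=f$ then $D'=D$; if $\mathrm{Add}^0(a)$ then $x\notin D$ and $D'=D\cup\{x\}$; if $\mathrm{Add}^1(a)$ then $x\in D$ and $D'=D$; if $\mathrm{Rem}^0(a)$ then $x\notin D$ and $D'=D$; if $\mathrm{Rem}^1(a)$ then $x\in D$ and $D'=D\setminus\{x\}$; if $\mathrm{Cnt}^0(a)$ then $x\notin D$ and $D'=D$; if $\mathrm{Cnt}^1(a)$ then $x\in D$ and $D'=D$. Functional specification (properties of a function $\gamma$): FS0: $<_0$ is a linear ordering of the events; $\mathrm{Add},\mathrm{Rem},\mathrm{Cnt}$ are pairwise disjoint; $\gamma$ is defined on the set of $\mathrm{Op}^1$ events and its values are $\mathrm{Add}^0$ events. FS1: for every event $a$ with $\mathrm{Op}^1(a)$: $\gamma(a)<_0 a$, $\mathrm{Add}^0(\gamma(a))$, $\mathrm{val}(a)=\mathrm{val}(\gamma(a))$, and there is no event $r$ with $\mathrm{Rem}^1(r)$, $\gamma(r)=\gamma(a)$ and $\gamma(a)<_0 r<_0 a$. FS2: for all events $a<_0 b$ with $\mathrm{Add}^0(a)$ and $\mathrm{Op}^0(b)$: if $\mathrm{val}(a)=\mathrm{val}(b)$ then there is an event $r$ with $a<_0 r<_0 b$, $\mathrm{Rem}^1(r)$ and $a=\gamma(r)$. *)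

theory Defs
  imports Main
begin

(* Events are identified with their indices i :: nat (event e_i);
   the order <_0 is then the usual < on nat. *)

datatype status = S0 | S1 | Sf

type_synonym pred = "nat \<Rightarrow> bool"

definition Op :: "pred \<Rightarrow> pred \<Rightarrow> pred \<Rightarrow> (nat \<Rightarrow> status) \<Rightarrow> status \<Rightarrow> nat \<Rightarrow> bool" where
  "Op Add Rem Cnt chi p a \<longleftrightarrow> (Add a \<or> Rem a \<or> Cnt a) \<and> chi a = p"

definition correct ::
  "pred \<Rightarrow> pred \<Rightarrow> pred \<Rightarrow> (nat \<Rightarrow> nat) \<Rightarrow> (nat \<Rightarrow> status) \<Rightarrow> nat set \<Rightarrow> nat \<Rightarrow> nat set \<Rightarrow> bool" where
  "correct Add Rem Cnt val chi D a D' \<longleftrightarrow>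
     (let x = val a in
       (chi a = Sf \<longrightarrow> D' = D) \<and>
       (Add a \<and> chi a = S0 \<longrightarrow> x \<notin> D \<and> D' = D \<union> {x}) \<and>
       (Add a \<and> chi a = S1 \<longrightarrow> x \<in> D \<and> D' = D) \<and>
       (Rem a \<and> chi a = S0 \<longrightarrow> x \<notin> D \<and> D' = D) \<and>
       (Rem a \<and> chi a = S1 \<longrightarrow> x \<in> D \<and> D' = D - {x}) \<and>
       (Cnt a \<and> chi a = S0 \<longrightarrow> x \<notin> D \<and> D' = D) \<and>
       (Cnt a \<and> chi a = S1 \<longrightarrow> x \<in> D \<and> D' = D))"

(* FS0: <_0 (= < on nat) is trivially a linear order; disjointness of Add, Rem, Cnt;
   gamma maps Op^1 events to Add^0 events (gamma is a total HOL function; only its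
   values on Op^1 events matter). *)
definition FS0 :: "pred \<Rightarrow> pred \<Rightarrow> pred \<Rightarrow> (nat \<Rightarrow> status) \<Rightarrow> (nat \<Rightarrow> nat) \<Rightarrow> bool" where
  "FS0 Add Rem Cnt chi \<gamma> \<longleftrightarrow>
     (\<forall>a. \<not> (Add a \<and> Rem a) \<and> \<not> (Add a \<and> Cnt a) \<and> \<not> (Rem a \<and> Cnt a)) \<and>
     (\<forall>a. Op Add Rem Cnt chi S1 a \<longrightarrow> Add (\<gamma> a) \<and> chi (\<gamma> a) = S0)"

definition FS1 :: "pred \<Rightarrow> pred \<Rightarrow> pred \<Rightarrow> (nat \<Rightarrow> nat) \<Rightarrow> (nat \<Rightarrow> status) \<Rightarrow> (nat \<Rightarrow> nat) \<Rightarrow> bool" where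
  "FS1 Add Rem Cnt val chi \<gamma> \<longleftrightarrow>
     (\<forall>a. Op Add Rem Cnt chi S1 a \<longrightarrow>
        \<gamma> a < a \<and> Add (\<gamma> a) \<and> chi (\<gamma> a) = S0 \<and> val a = val (\<gamma> a) \<and>
        \<not> (\<exists>r. Rem r \<and> chi r = S1 \<and> \<gamma> r = \<gamma> a \<and> \<gamma> a < r \<and> r < a))"

definition FS2 :: "pred \<Rightarrow> pred \<Rightarrow> pred \<Rightarrow> (nat \<Rightarrow> nat) \<Rightarrow> (nat \<Rightarrow> status) \<Rightarrow> (nat \<Rightarrow> nat) \<Rightarrow> bool" where
  "FS2 Add Rem Cnt val chi \<gamma> \<longleftrightarrow>
     (\<forall>a b. a < b \<and> Add a \<and> chi a = S0 \<and> Op Add Rem Cnt chi S0 b \<longrightarrow>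
        val a = val b \<longrightarrow>
        (\<exists>r. a < r \<and> r < b \<and> Rem r \<and> chi r = S1 \<and> a = \<gamma> r))"

end

theory Submission
  imports Defs
begin



locale dirA =
  fixes Add Rem Cnt :: "nat \<Rightarrow> bool" and val :: "nat \<Rightarrow> nat" and chi :: "nat \<Rightarrow> status"
    and D :: "nat \<Rightarrow> nat set"
  assumes partition: "\<And>a. (Add a \<or> Rem a \<or> Cnt a) \<and> \<not> (Add a \<and> Rem a)
                          \<and> \<not> (Add a \<and> Cnt a) \<and> \<not> (Rem a \<and> Cnt a)"
    and D0: "D 0 = {}"
    and corr: "\<And>i. correct Add Rem Cnt val chi (D i) i (D (Suc i))"
begin

definition W :: "nat \<Rightarrow> nat \<Rightarrow> nat \<Rightarrow> bool" where
  "W x i j \<longleftrightarrow> j < i \<and> Add j \<and> chi j = S0 \<and> val j = x \<and>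
     (\<forall>r. j<r \<and> r<i \<longrightarrow> \<not>(Rem r \<and> chi r = S1 \<and> val r = x))"

lemma inv: "x \<in> D i \<longleftrightarrow> (\<exists>j. W x i j)"
proof (induction i)
  case 0 then show ?case by (simp add: D0 W_def)
next
  case (Suc i)
  have c: "correct Add Rem Cnt val chi (D i) i (D (Suc i))" by (rule corr)
  have p: "(Add i \<or> Rem i \<or> Cnt i) \<and> \<not> (Add i \<and> Rem i)
                          \<and> \<not> (Add i \<and> Cnt i) \<and> \<not> (Rem i \<and> Cnt i)" by (rule partition)
  have WS: "W x (Suc i) j \<longleftrightarrow> (W x i j \<and> \<not>(Rem i \<and> chi i = S1 \<and> val i = x)) \<or>
       (j = i \<and> Add i \<and> chi i = S0 \<and> val i = x)" for j
    unfolding W_def using p by (auto simp: less_Suc_eq)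
  have Wlt: "W x i j \<Longrightarrow> j < i" for j unfolding W_def by simp
  show ?case
  proof (cases "Add i \<and> chi i = S0")
    case True
    hence "D (Suc i) = D i \<union> {val i}" using c unfolding correct_def Let_def by auto
    moreover have "(\<exists>j. W x (Suc i) j) \<longleftrightarrow> (\<exists>j. W x i j) \<or> x = val i"
      unfolding WS using True p by auto
    ultimately show ?thesis using Suc.IH by auto
  next
    case nA: False
    show ?thesis
    proof (cases "Rem i \<and> chi i = S1")
      case True
      hence "D (Suc i) = D i - {val i}" using c unfolding correct_def Let_def by auto
      moreover have "(\<exists>j. W x (Suc i) j) \<longleftrightarrow> (\<exists>j. W x i j) \<and> x \<noteq> val i"
        unfolding WS using True nA by auto
      ultimately show ?thesis using Suc.IH by auto
    next
      case False
      have "D (Suc i) = D i" using c nA False p unfolding correct_def Let_def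
        by (cases "chi i") auto
      moreover have "(\<exists>j. W x (Suc i) j) \<longleftrightarrow> (\<exists>j. W x i j)"
        unfolding WS using False nA by auto
      ultimately show ?thesis using Suc.IH by auto
    qed
  qed
qed

lemma W_unique: assumes "W x i j" "j < g" "g < i" "Add g" "chi g = S0" "val g = x"
  shows False
proof -
  have "W x g j" using assms unfolding W_def by auto
  hence "x \<in> D g" using inv by blast
  moreover have "val g \<notin> D g" using corr[of g] assms unfolding correct_def Let_def by auto
  ultimately show False using assms by simp
qed

definition gam :: "nat \<Rightarrow> nat" where
  "gam a = (GREATEST j. j < a \<and> Add j \<and> chi j = S0 \<and> val j = val a)"

lemma gam_W: assumes "W (val a) a j" shows "gam a = j"
proof -
  have "j < a \<and> Add j \<and> chi j = S0 \<and> val j = val a" using assms W_def by auto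
  moreover have "\<And>g. g < a \<and> Add g \<and> chi g = S0 \<and> val g = val a \<Longrightarrow> g \<le> j"
    using W_unique[OF assms] by (meson not_le_imp_less)
  ultimately show ?thesis unfolding gam_def by (rule Greatest_equality)
qed

lemma op1_in: assumes "Op Add Rem Cnt chi S1 a" shows "val a \<in> D a"
  using assms corr[of a] unfolding Op_def correct_def Let_def by auto

lemma op0_notin: assumes "Op Add Rem Cnt chi S0 a" shows "val a \<notin> D a"
  using assms corr[of a] unfolding Op_def correct_def Let_def by auto

lemma op1_W: assumes "Op Add Rem Cnt chi S1 a" shows "W (val a) a (gam a)"
proof -
  obtain j where "W (val a) a j" using op1_in[OF assms] inv by blast
  then show ?thesis using gam_W by simp
qed

lemma res: "FS0 Add Rem Cnt chi gam \<and> FS1 Add Rem Cnt val chi gam \<and> FS2 Add Rem Cnt val chi gam"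
proof (intro conjI)
  show "FS0 Add Rem Cnt chi gam" unfolding FS0_def using partition op1_W W_def by blast
  show "FS1 Add Rem Cnt val chi gam" unfolding FS1_def
  proof (intro allI impI)
    fix a assume a: "Op Add Rem Cnt chi S1 a"
    have w: "W (val a) a (gam a)" by (rule op1_W[OF a])
    show "gam a < a \<and> Add (gam a) \<and> chi (gam a) = S0 \<and> val a = val (gam a) \<and>
        \<not> (\<exists>r. Rem r \<and> chi r = S1 \<and> gam r = gam a \<and> gam a < r \<and> r < a)"
    proof -
      have "\<not> (\<exists>r. Rem r \<and> chi r = S1 \<and> gam r = gam a \<and> gam a < r \<and> r < a)"
      proof
        assume "\<exists>r. Rem r \<and> chi r = S1 \<and> gam r = gam a \<and> gam a < r \<and> r < a"
        then obtain r where r: "Rem r" "chi r = S1" "gam r = gam a" "gam a < r" "r < a" by blast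
        have "Op Add Rem Cnt chi S1 r" using r Op_def by auto
        hence "W (val r) r (gam r)" by (rule op1_W)
        hence "val r = val a" using w r W_def by auto
        thus False using w r W_def by auto
      qed
      thus ?thesis using w W_def by auto
    qed
  qed
  show "FS2 Add Rem Cnt val chi gam" unfolding FS2_def
  proof (intro allI impI)
    fix a b assume ab: "a < b \<and> Add a \<and> chi a = S0 \<and> Op Add Rem Cnt chi S0 b" and v: "val a = val b"
    have "val b \<notin> D b" using op0_notin ab by auto
    hence "\<not> W (val b) b a" using inv by blast
    then have ex: "\<exists>r. a < r \<and> r < b \<and> Rem r \<and> chi r = S1 \<and> val r = val b" using ab v W_def by auto
    define r where "r = (LEAST r. a < r \<and> r < b \<and> Rem r \<and> chi r = S1 \<and> val r = val b)"
    have r: "a < r \<and> r < b \<and> Rem r \<and> chi r = S1 \<and> val r = val b"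
      unfolding r_def using ex by (rule LeastI_ex)
    have rmin: "\<And>q. a < q \<and> q < b \<and> Rem q \<and> chi q = S1 \<and> val q = val b \<Longrightarrow> r \<le> q"
      unfolding r_def by (rule Least_le)
    have "W (val r) r a" unfolding W_def using ab v r rmin
      by (metis dual_order.strict_trans not_le)
    hence "gam r = a" by (rule gam_W)
    thus "\<exists>r. a < r \<and> r < b \<and> Rem r \<and> chi r = S1 \<and> a = gam r" using r by auto
  qed
qed

end


locale dirB =
  fixes Add Rem Cnt :: "nat \<Rightarrow> bool" and val :: "nat \<Rightarrow> nat" and chi :: "nat \<Rightarrow> status"
    and g :: "nat \<Rightarrow> nat"
  assumes partition: "\<And>a. (Add a \<or> Rem a \<or> Cnt a) \<and> \<not> (Add a \<and> Rem a)
                          \<and> \<not> (Add a \<and> Cnt a) \<and> \<not> (Rem a \<and> Cnt a)"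
    and F1: "FS1 Add Rem Cnt val chi g" and F2: "FS2 Add Rem Cnt val chi g"
begin

definition V :: "nat \<Rightarrow> nat \<Rightarrow> bool" where
  "V i j \<longleftrightarrow> j < i \<and> Add j \<and> chi j = S0 \<and>
     (\<forall>r. j<r \<and> r<i \<longrightarrow> \<not>(Rem r \<and> chi r = S1 \<and> g r = j))"

definition DD :: "nat \<Rightarrow> nat set" where
  "DD i = val ` {j. V i j}"

lemma fin: "finite (DD i)"
  unfolding DD_def V_def by (rule finite_imageI) (rule finite_subset[of _ "{..<i}"], auto)

lemma DD0: "DD 0 = {}" unfolding DD_def V_def by auto

lemma notin: assumes "Op Add Rem Cnt chi S0 b" shows "val b \<notin> DD b"
proof
  assume "val b \<in> DD b"
  then obtain j where j: "V b j" "val j = val b" unfolding DD_def by auto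
  then obtain r where "j < r \<and> r < b \<and> Rem r \<and> chi r = S1 \<and> j = g r"
    using F2 assms unfolding FS2_def V_def by blast
  thus False using j V_def by auto
qed

lemma isin: assumes "Op Add Rem Cnt chi S1 a" shows "V a (g a)" "val (g a) = val a"
  using F1 assms unfolding FS1_def V_def by auto

lemma VS: "V (Suc i) j \<longleftrightarrow> (V i j \<and> \<not>(Rem i \<and> chi i = S1 \<and> g i = j)) \<or>
       (j = i \<and> Add i \<and> chi i = S0)"
  unfolding V_def by (auto simp: less_Suc_eq)

lemma uniq: assumes "V i j" "V i k" "val j = val k" "j < k" shows False
proof -
  have "Op Add Rem Cnt chi S0 k" using assms V_def Op_def by auto
  then obtain r where "j < r \<and> r < k \<and> Rem r \<and> chi r = S1 \<and> j = g r"
    using F2 assms unfolding FS2_def V_def by blast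
  thus False using assms V_def by auto
qed

lemma uniq2: assumes "V i j" "V i k" "val j = val k" shows "j = k"
  using uniq[OF assms] uniq[OF assms(2,1) assms(3)[symmetric]] by (meson linorder_neqE_nat)

lemma corrB: "correct Add Rem Cnt val chi (DD i) i (DD (Suc i))"
proof -
  have p: "(Add i \<or> Rem i \<or> Cnt i) \<and> \<not> (Add i \<and> Rem i)
                          \<and> \<not> (Add i \<and> Cnt i) \<and> \<not> (Rem i \<and> Cnt i)" by (rule partition)
  show ?thesis
  proof (cases "chi i")
    case S0
    hence o: "Op Add Rem Cnt chi S0 i" using p Op_def by auto
    have ni: "val i \<notin> DD i" by (rule notin[OF o])
    have "{j. V (Suc i) j} = {j. V i j} \<union> (if Add i then {i} else {})"
      unfolding VS using S0 by auto
    hence "DD (Suc i) = (if Add i then DD i \<union> {val i} else DD i)"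
      unfolding DD_def by simp
    then show ?thesis unfolding correct_def Let_def using S0 p ni by simp
  next
    case S1
    hence o: "Op Add Rem Cnt chi S1 i" using p Op_def by auto
    have gi: "V i (g i)" "val (g i) = val i" using isin[OF o] by auto
    have ii: "val i \<in> DD i" unfolding DD_def using gi by (metis image_eqI mem_Collect_eq)
    have u: "\<And>j. V i j \<Longrightarrow> val j = val i \<Longrightarrow> j = g i"
      using gi uniq2 by metis
    have e: "{j. V (Suc i) j} = {j. V i j \<and> \<not> (Rem i \<and> g i = j)}"
      unfolding VS using S1 by auto
    have "DD (Suc i) = (if Rem i then DD i - {val i} else DD i)"
    proof (cases "Rem i")
      case True
      have "val ` {j. V i j \<and> g i \<noteq> j} = val ` {j. V i j} - {val i}"
      proof
        show "val ` {j. V i j \<and> g i \<noteq> j} \<subseteq> val ` {j. V i j} - {val i}"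
          using u by fastforce
        show "val ` {j. V i j} - {val i} \<subseteq> val ` {j. V i j \<and> g i \<noteq> j}"
          using gi(2) by blast
      qed
      then show ?thesis using True e unfolding DD_def by simp
    next
      case False
      then show ?thesis using e unfolding DD_def by simp
    qed
    then show ?thesis unfolding correct_def Let_def using S1 p ii by simp
  next
    case Sf
    have "{j. V (Suc i) j} = {j. V i j}" unfolding VS using Sf by auto
    hence "DD (Suc i) = DD i" unfolding DD_def by simp
    then show ?thesis unfolding correct_def Let_def using Sf by simp
  qed
qed

end

theorem theorem2p3:
  fixes Add Rem Cnt :: "nat \<Rightarrow> bool"
    and val :: "nat \<Rightarrow> nat"
    and chi :: "nat \<Rightarrow> status"
  assumes partition: "\<And>a. (Add a \<or> Rem a \<or> Cnt a) \<and> \<not> (Add a \<and> Rem a)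
                          \<and> \<not> (Add a \<and> Cnt a) \<and> \<not> (Rem a \<and> Cnt a)"
    and cnt_status: "\<And>a. Cnt a \<Longrightarrow> chi a \<noteq> Sf"
  shows "((\<exists>D :: nat \<Rightarrow> nat set. (\<forall>i. finite (D i)) \<and> D 0 = {} \<and>
              (\<forall>i. correct Add Rem Cnt val chi (D i) i (D (Suc i))))
          \<longrightarrow> (\<exists>\<gamma>. FS0 Add Rem Cnt chi \<gamma> \<and> FS1 Add Rem Cnt val chi \<gamma> \<and> FS2 Add Rem Cnt val chi \<gamma>))
       \<and> ((\<exists>\<gamma>. FS0 Add Rem Cnt chi \<gamma> \<and> FS1 Add Rem Cnt val chi \<gamma> \<and> FS2 Add Rem Cnt val chi \<gamma>)
          \<longrightarrow> (\<exists>D :: nat \<Rightarrow> nat set. (\<forall>i. finite (D i)) \<and> D 0 = {} \<and>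
              (\<forall>i. correct Add Rem Cnt val chi (D i) i (D (Suc i)))))"
  proof (intro conjI impI)
  assume "\<exists>D :: nat \<Rightarrow> nat set. (\<forall>i. finite (D i)) \<and> D 0 = {} \<and>
              (\<forall>i. correct Add Rem Cnt val chi (D i) i (D (Suc i)))"
  then obtain D :: "nat \<Rightarrow> nat set" where "D 0 = {}" "\<And>i. correct Add Rem Cnt val chi (D i) i (D (Suc i))" by blast
  then interpret dirA Add Rem Cnt val chi D using partition by unfold_locales auto
  show "\<exists>\<gamma>. FS0 Add Rem Cnt chi \<gamma> \<and> FS1 Add Rem Cnt val chi \<gamma> \<and> FS2 Add Rem Cnt val chi \<gamma>"
    using res by blast
next
  assume "\<exists>\<gamma>. FS0 Add Rem Cnt chi \<gamma> \<and> FS1 Add Rem Cnt val chi \<gamma> \<and> FS2 Add Rem Cnt val chi \<gamma>"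
  then obtain g where "FS1 Add Rem Cnt val chi g" "FS2 Add Rem Cnt val chi g" by blast
  then interpret dirB Add Rem Cnt val chi g using partition by unfold_locales auto
  show "\<exists>D :: nat \<Rightarrow> nat set. (\<forall>i. finite (D i)) \<and> D 0 = {} \<and>
              (\<forall>i. correct Add Rem Cnt val chi (D i) i (D (Suc i)))"
    using fin DD0 corrB by blast
qed

end
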